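(* Let $N\ge 2$, $0<p<1\le q$ with $pq<1$, and let $(u,v)$ be a positive radially symmetric solution of $\Delta u=v^p$, $\Delta v=|\nabla u|^q$ in $\mathbb{R}^N$, written as functions of $r=|x|$. For $t=\ln r\in\mathbb{R}$ define $$Y(t)=\frac{rv'(r)}{v(r)},\qquad Z(t)=\frac{rv^p(r)}{u'(r)},\qquad W(t)=\frac{r\,(u'(r))^q}{v'(r)}.$$ Then for all $t\in\mathbb{R}$: $$0\le Y(t)\le\frac{2+q}{1-pq},\qquad N\le Z(t)\le N+\frac{p(2+q)}{1-pq},\qquad N+q\le W(t)\le N-2+\frac{2+q}{1-pq}.$$
   Context: A positive radially symmetric solution is a pair of radially symmetric functions $u,v\in C^2(\mathbb{R}^N)$, positive everywhere, satisfying the equations pointwise; for such solutions $u'(r)>0$ and $v'(r)>0$ for $r>0$, so $Y,Z,W$ are well defined. *)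

theory Defs
  imports "HOL-Analysis.Analysis"
begin

definition C2_with :: "('a::euclidean_space \<Rightarrow> real) \<Rightarrow> ('a \<Rightarrow> 'a) \<Rightarrow> ('a \<Rightarrow> 'a \<Rightarrow> 'a) \<Rightarrow> bool" where
  "C2_with f g H \<longleftrightarrow>
     (\<forall>x. (f has_derivative (\<lambda>h. g x \<bullet> h)) (at x)) \<and>
     (\<forall>x. (g has_derivative H x) (at x)) \<and>
     (\<forall>i\<in>Basis. \<forall>j\<in>Basis. continuous_on UNIV (\<lambda>x. H x i \<bullet> j))"

definition laplacian_of :: "('a::euclidean_space \<Rightarrow> 'a \<Rightarrow> 'a) \<Rightarrow> 'a \<Rightarrow> real" where
  "laplacian_of H x = (\<Sum>i\<in>Basis. H x i \<bullet> i)"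

definition radially_symmetric :: "('a::real_normed_vector \<Rightarrow> real) \<Rightarrow> bool" where
  "radially_symmetric f \<longleftrightarrow> (\<forall>x y. norm x = norm y \<longrightarrow> f x = f y)"

end

theory Submission
  imports Defs
begin


lemma radial_D1:
  fixes f :: "'a::euclidean_space \<Rightarrow> real" and g :: "'a \<Rightarrow> 'a"
  assumes d: "\<forall>x. (f has_derivative (\<lambda>h. g x \<bullet> h)) (at x)"
  shows "((\<lambda>s. f (s *\<^sub>R e)) has_real_derivative (g (s *\<^sub>R e) \<bullet> e)) (at s)"
proof -
  have "((\<lambda>s. f (s *\<^sub>R e)) has_derivative (\<lambda>h. g (s *\<^sub>R e) \<bullet> (h *\<^sub>R e))) (at s)"
    using has_derivative_compose[OF has_derivative_scaleR_left[OF has_derivative_ident, of e] d[rule_format]]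
    by (simp add: o_def)
  moreover have "(\<lambda>h. g (s *\<^sub>R e) \<bullet> (h *\<^sub>R e)) = (\<lambda>h. (g (s *\<^sub>R e) \<bullet> e) * h)"
    by (auto simp: inner_scaleR_right)
  ultimately show ?thesis by (simp add: has_field_derivative_def)
qed

lemma radial_grad:
  fixes f :: "'a::euclidean_space \<Rightarrow> real" and g :: "'a \<Rightarrow> 'a"
  assumes d: "\<forall>x. (f has_derivative (\<lambda>h. g x \<bullet> h)) (at x)"
    and rad: "radially_symmetric f" and e: "norm e = 1" and x: "x \<noteq> 0"
  shows "g x = ((g (norm x *\<^sub>R e) \<bullet> e) / norm x) *\<^sub>R x"
proof -
  define F where "F = (\<lambda>s. f (s *\<^sub>R e))"
  have feq: "f = (\<lambda>y. F (norm y))"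
  proof
    fix y :: 'a
    have "norm y = norm (norm y *\<^sub>R e)" using e by simp
    thus "f y = F (norm y)" using rad unfolding radially_symmetric_def F_def by blast
  qed
  have dF: "(F has_real_derivative (g (norm x *\<^sub>R e) \<bullet> e)) (at (norm x))"
    unfolding F_def by (rule radial_D1[OF d])
  have "((\<lambda>y. F (norm y)) has_derivative (\<lambda>h. (g (norm x *\<^sub>R e) \<bullet> e) * (h \<bullet> sgn x))) (at x)"
    using has_derivative_compose[OF has_derivative_norm[OF x] dF[unfolded has_field_derivative_def]]
    by (simp add: o_def mult.commute)
  hence "(f has_derivative (\<lambda>h. (g (norm x *\<^sub>R e) \<bullet> e) * (h \<bullet> sgn x))) (at x)" using feq by simp
  from has_derivative_unique[OF d[rule_format] this]
  have eqh: "\<And>h. g x \<bullet> h = (g (norm x *\<^sub>R e) \<bullet> e) * (h \<bullet> sgn x)" by meson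
  show ?thesis
  proof (rule euclidean_eqI)
    fix b :: 'a assume "b \<in> Basis"
    show "g x \<bullet> b = ((g (norm x *\<^sub>R e) \<bullet> e) / norm x) *\<^sub>R x \<bullet> b"
      using eqh[of b] by (simp add: sgn_div_norm inner_commute divide_inverse)
  qed
qed

lemma radial_D2:
  fixes g :: "'a::euclidean_space \<Rightarrow> 'a" and H
  assumes dg: "\<forall>x. (g has_derivative H x) (at x)"
  shows "((\<lambda>s. g (s *\<^sub>R e) \<bullet> e) has_real_derivative (H (s *\<^sub>R e) e \<bullet> e)) (at s)"
proof -
  have bl: "bounded_linear (H (s *\<^sub>R e))" using dg has_derivative_bounded_linear by blast
  have "((\<lambda>s. g (s *\<^sub>R e)) has_derivative (\<lambda>h. H (s *\<^sub>R e) (h *\<^sub>R e))) (at s)"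
    using has_derivative_compose[OF has_derivative_scaleR_left[OF has_derivative_ident, of e] dg[rule_format, of "s *\<^sub>R e"]]
    by (simp add: o_def)
  hence "((\<lambda>s. g (s *\<^sub>R e) \<bullet> e) has_derivative (\<lambda>h. H (s *\<^sub>R e) (h *\<^sub>R e) \<bullet> e)) (at s)"
    by (intro derivative_eq_intros) auto
  moreover have "(\<lambda>h. H (s *\<^sub>R e) (h *\<^sub>R e) \<bullet> e) = (\<lambda>h. (H (s *\<^sub>R e) e \<bullet> e) * h)"
    using linear.scaleR[OF bounded_linear.linear[OF bl]] by (auto simp: mult.commute)
  ultimately show ?thesis by (simp add: has_field_derivative_def)
qed

lemma radial_even:
  fixes f :: "'a::euclidean_space \<Rightarrow> real" and g :: "'a \<Rightarrow> 'a"
  assumes d: "\<forall>x. (f has_derivative (\<lambda>h. g x \<bullet> h)) (at x)" and rad: "radially_symmetric f"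
  shows "g (0 *\<^sub>R e) \<bullet> e = 0"
proof -
  define F where "F = (\<lambda>s. f (s *\<^sub>R e))"
  have dF: "\<And>s. (F has_real_derivative (g (s *\<^sub>R e) \<bullet> e)) (at s)"
    unfolding F_def by (rule radial_D1[OF d])
  have Fm: "(\<lambda>s. F (- s)) = F"
  proof
    fix s :: real
    have "norm ((- s) *\<^sub>R e) = norm (s *\<^sub>R e)" by simp
    thus "F (- s) = F s" using rad unfolding radially_symmetric_def F_def by blast
  qed
  have "DERIV F (- 0) :> (g (0 *\<^sub>R e) \<bullet> e)" using dF[of 0] by simp
  hence "DERIV (\<lambda>s. F (- s)) 0 :> - (g (0 *\<^sub>R e) \<bullet> e)" by (simp only: DERIV_mirror)
  hence "DERIV F 0 :> - (g (0 *\<^sub>R e) \<bullet> e)" by (simp only: Fm)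
  from DERIV_unique[OF dF[of 0] this] show ?thesis by simp
qed

lemma radial_lap:
  fixes f :: "'a::euclidean_space \<Rightarrow> real" and g :: "'a \<Rightarrow> 'a" and H
  assumes C2: "C2_with f g H" and rad: "radially_symmetric f" and e: "norm e = 1" and r: "r > 0"
  shows "laplacian_of H (r *\<^sub>R e) = H (r *\<^sub>R e) e \<bullet> e + (real DIM('a) - 1) / r * (g (r *\<^sub>R e) \<bullet> e)"
proof -
  have d: "\<forall>x. (f has_derivative (\<lambda>h. g x \<bullet> h)) (at x)" and dg: "\<forall>x. (g has_derivative H x) (at x)"
    using C2 unfolding C2_with_def by auto
  define D1 where "D1 = (\<lambda>s. g (s *\<^sub>R e) \<bullet> e)"
  define x where "x = r *\<^sub>R e"
  have nx: "norm x = r" using e r by (simp add: x_def)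
  have x0: "x \<noteq> 0" using nx r by auto
  have sx: "sgn x = e" using e r by (simp add: x_def sgn_scaleR sgn_div_norm)
  have dD1: "(D1 has_real_derivative (H x e \<bullet> e)) (at r)"
  proof -
    have bl: "bounded_linear (H x)" using dg has_derivative_bounded_linear by blast
    have "((\<lambda>s. g (s *\<^sub>R e)) has_derivative (\<lambda>h. H x (h *\<^sub>R e))) (at r)"
      using has_derivative_compose[OF has_derivative_scaleR_left[OF has_derivative_ident, of e] dg[rule_format, of "r *\<^sub>R e"]]
      by (simp add: o_def x_def)
    hence "((\<lambda>s. g (s *\<^sub>R e) \<bullet> e) has_derivative (\<lambda>h. H x (h *\<^sub>R e) \<bullet> e)) (at r)"
      by (intro derivative_eq_intros) auto
    moreover have "(\<lambda>h. H x (h *\<^sub>R e) \<bullet> e) = (\<lambda>h. (H x e \<bullet> e) * h)"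
      using linear.scaleR[OF bounded_linear.linear[OF bl]] by (auto simp: mult.commute)
    ultimately show ?thesis by (simp add: has_field_derivative_def D1_def)
  qed
  define phi where "phi = (\<lambda>s. D1 s / s)"
  define phi' where "phi' = ((H x e \<bullet> e) * r - D1 r * 1) / (r * r)"
  have dphi: "(phi has_real_derivative phi') (at r)"
    unfolding phi_def phi'_def using r by (intro DERIV_divide dD1 DERIV_ident) auto
  have dpn: "((\<lambda>y. phi (norm y)) has_derivative (\<lambda>h. phi' * (h \<bullet> e))) (at x)"
    using has_derivative_compose[OF has_derivative_norm[OF x0] dphi[unfolded has_field_derivative_def, folded nx]]
    by (simp add: o_def nx sx)
  have dG: "((\<lambda>y. phi (norm y) *\<^sub>R y) has_derivative (\<lambda>h. phi r *\<^sub>R h + (phi' * (h \<bullet> e)) *\<^sub>R x)) (at x)"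
    using has_derivative_scaleR[OF dpn has_derivative_ident] by (simp add: nx)
  have geq: "\<And>y. y \<in> - {0} \<Longrightarrow> phi (norm y) *\<^sub>R y = g y"
    using radial_grad[OF d rad e] by (auto simp: phi_def D1_def)
  have "(g has_derivative (\<lambda>h. phi r *\<^sub>R h + (phi' * (h \<bullet> e)) *\<^sub>R x)) (at x)"
    by (rule has_derivative_transform_within_open[OF dG open_Compl[OF closed_singleton] _ geq]) (use x0 in auto)
  from has_derivative_unique[OF dg[rule_format, of x] this]
  have Hx: "\<And>h. H x h = phi r *\<^sub>R h + (phi' * (h \<bullet> e)) *\<^sub>R x" by meson
  have "laplacian_of H x = (\<Sum>i\<in>Basis. phi r + phi' * r * ((e \<bullet> i) * (e \<bullet> i)))"
    unfolding laplacian_of_def Hx by (intro sum.cong) (auto simp: x_def inner_commute inner_add_right inner_Basis algebra_simps)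
  also have "\<dots> = real DIM('a) * phi r + phi' * r * (e \<bullet> e)"
    by (simp add: sum.distrib sum_distrib_left[symmetric] euclidean_inner[of e e])
  also have "e \<bullet> e = 1" using e by (simp add: norm_eq_1)
  finally have "laplacian_of H x = real DIM('a) * phi r + phi' * r" by simp
  also have "\<dots> = H x e \<bullet> e + (real DIM('a) - 1) / r * D1 r"
    using r unfolding phi_def phi'_def by (simp add: field_simps)
  finally show ?thesis by (simp add: x_def D1_def)
qed



lemma dpow:
  assumes "(f has_real_derivative f') (at x)" "f x > 0"
  shows "((\<lambda>x. f x powr a) has_real_derivative (f x powr a * (a * f' / f x))) (at x)"
  using DERIV_powr[OF assms DERIV_const, of a] by (simp add: mult.commute)

lemma xpow: "(x::real) \<noteq> 0 \<Longrightarrow> m \<ge> 1 \<Longrightarrow> x ^ (m - 1) = x ^ m / x"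
  by (cases m) auto

lemma xpow': "m \<ge> 1 \<Longrightarrow> (x::real) * x ^ (m - Suc 0) = x ^ m"
  by (cases m) auto

lemma xpow'': "m \<ge> 1 \<Longrightarrow> (x::real) \<noteq> 0 \<Longrightarrow> x ^ (m - Suc 0) = x ^ m / x"
  by (cases m) auto

lemma pos_near:
  fixes f :: "real \<Rightarrow> real"
  assumes "isCont f x" "f x > 0"
  shows "\<exists>d>0. \<forall>y. \<bar>y - x\<bar> < d \<longrightarrow> f y > 0"
proof -
  have "\<forall>\<^sub>F y in nhds x. f y > 0"
    using assms by (auto simp: isCont_def tendsto_at_iff_tendsto_nhds dest: order_tendstoD)
  then obtain d where "d > 0" "\<forall>y. dist y x < d \<longrightarrow> f y > 0"
    unfolding eventually_nhds_metric by blast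
  thus ?thesis by (auto simp: dist_real_def)
qed

lemma ode_bounds:
  fixes U1 U2 V V1 V2 :: "real \<Rightarrow> real" and p q R :: real and m :: nat
  assumes m: "m \<ge> 1" and pq: "0 < p" "p < 1" "1 \<le> q" "p * q < 1"
    and dV: "\<And>s. (V has_real_derivative V1 s) (at s)"
    and dU1: "\<And>s. (U1 has_real_derivative U2 s) (at s)"
    and dV1: "\<And>s. (V1 has_real_derivative V2 s) (at s)"
    and Vpos: "\<And>s. V s > 0"
    and U10: "U1 0 = 0"
    and odeU: "\<And>r. r > 0 \<Longrightarrow> U2 r + m / r * U1 r = V r powr p"
    and odeV: "\<And>r. r > 0 \<Longrightarrow> V2 r + m / r * V1 r = \<bar>U1 r\<bar> powr q"
    and R: "R > 0"
  shows "0 \<le> R * V1 R / V R \<and> R * V1 R / V R \<le> (2 + q) / (1 - p * q) \<and>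
     real (Suc m) \<le> R * V R powr p / U1 R \<and> R * V R powr p / U1 R \<le> real (Suc m) + p * (2 + q) / (1 - p * q) \<and>
     real (Suc m) + q \<le> R * U1 R powr q / V1 R \<and> R * U1 R powr q / V1 R \<le> real (Suc m) - 2 + (2 + q) / (1 - p * q)"
proof -
  have cV: "continuous_on A V" for A using dV
    by (meson DERIV_isCont continuous_at_imp_continuous_on)
  have cU1: "continuous_on A U1" for A using dU1
    by (meson DERIV_isCont continuous_at_imp_continuous_on)
  have cV1: "continuous_on A V1" for A using dV1
    by (meson DERIV_isCont continuous_at_imp_continuous_on)
  have U2e: "U2 x = V x powr p - m / x * U1 x" if "x > 0" for x using odeU[OF that] by simp
  have U1pos: "U1 t > 0" if t: "t > 0" for t
  proof -
    have "(\<lambda>x. x ^ m * U1 x) 0 < (\<lambda>x. x ^ m * U1 x) t"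
    proof (rule DERIV_pos_imp_increasing_open[OF t])
      fix x :: real assume x: "0 < x" "x < t"
      have "((\<lambda>x. x ^ m * U1 x) has_real_derivative (real m * x ^ (m - 1) * U1 x + x ^ m * U2 x)) (at x)"
        by (auto intro!: derivative_eq_intros dU1)
      moreover have "real m * x ^ (m - 1) * U1 x + x ^ m * U2 x = x ^ m * V x powr p"
        using x m by (simp add: U2e xpow'' field_simps)
      moreover have "x ^ m * V x powr p > 0" using x Vpos[of x] by simp
      ultimately show "\<exists>y. ((\<lambda>x. x ^ m * U1 x) has_real_derivative y) (at x) \<and> 0 < y" by auto
    next
      show "continuous_on {0..t} (\<lambda>x. x ^ m * U1 x)" by (intro continuous_intros cU1)
    qed
    thus ?thesis using m t by (simp add: zero_less_mult_iff power_0_left)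
  qed
  have U1nn: "U1 x \<ge> 0" if "x \<ge> 0" for x using that U1pos U10 by (cases "x = 0") (auto simp: less_imp_le)
  have V2e: "V2 x = U1 x powr q - m / x * V1 x" if "x > 0" for x using odeV[OF that] U1pos[OF that] by simp
  have V1pos: "V1 t > 0" if t: "t > 0" for t
  proof -
    have "(\<lambda>x. x ^ m * V1 x) 0 < (\<lambda>x. x ^ m * V1 x) t"
    proof (rule DERIV_pos_imp_increasing_open[OF t])
      fix x :: real assume x: "0 < x" "x < t"
      have "((\<lambda>x. x ^ m * V1 x) has_real_derivative (real m * x ^ (m - 1) * V1 x + x ^ m * V2 x)) (at x)"
        by (auto intro!: derivative_eq_intros dV1)
      moreover have "real m * x ^ (m - 1) * V1 x + x ^ m * V2 x = x ^ m * U1 x powr q"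
        using x m by (simp add: V2e xpow'' field_simps)
      moreover have "x ^ m * U1 x powr q > 0" using x U1pos[of x] by simp
      ultimately show "\<exists>y. ((\<lambda>x. x ^ m * V1 x) has_real_derivative y) (at x) \<and> 0 < y" by auto
    next
      show "continuous_on {0..t} (\<lambda>x. x ^ m * V1 x)" by (intro continuous_intros cV1)
    qed
    thus ?thesis using m t by (simp add: zero_less_mult_iff power_0_left)
  qed
  have cVp: "continuous_on A (\<lambda>x. V x powr p)" for A
    using Vpos by (intro continuous_intros cV) (auto simp: less_imp_neq[symmetric])
  have cUq: "continuous_on {0..t} (\<lambda>x. U1 x powr q)" for t
    using U1nn pq by (intro continuous_on_powr' cU1 continuous_intros) auto
  define zeta where "zeta = (\<lambda>x. x ^ Suc m * V x powr p - real (Suc m) * x ^ m * U1 x)"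
  have zeta_nn: "zeta t \<ge> 0" if t: "t \<ge> 0" for t
  proof -
    have "zeta 0 \<le> zeta t"
    proof (rule DERIV_nonneg_imp_increasing_open[OF t])
      fix x :: real assume x: "0 < x" "x < t"
      have "(zeta has_real_derivative (real (Suc m) * x ^ m * V x powr p + x ^ Suc m * (V x powr p * (p * V1 x / V x))
          - real (Suc m) * (real m * x ^ (m - 1) * U1 x + x ^ m * U2 x))) (at x)"
        unfolding zeta_def using Vpos[of x] m by (auto intro!: derivative_eq_intros dU1 dV simp: powr_diff xpow' field_simps)
      moreover have "real (Suc m) * x ^ m * V x powr p + x ^ Suc m * (V x powr p * (p * V1 x / V x))
          - real (Suc m) * (real m * x ^ (m - 1) * U1 x + x ^ m * U2 x) = x ^ Suc m * (V x powr p * (p * V1 x / V x))"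
        using x m by (simp add: U2e xpow'' field_simps)
      moreover have "x ^ Suc m * (V x powr p * (p * V1 x / V x)) \<ge> 0"
        using x Vpos[of x] V1pos[of x] pq by simp
      ultimately show "\<exists>y. (zeta has_real_derivative y) (at x) \<and> 0 \<le> y" by metis
    next
      show "continuous_on {0..t} zeta" unfolding zeta_def by (intro continuous_intros cU1 cVp)
    qed
    thus ?thesis using m by (simp add: zeta_def power_0_left)
  qed
  define eta where "eta = (\<lambda>x. x ^ Suc m * U1 x powr q - (real (Suc m) + q) * x ^ m * V1 x)"
  have eta_nn: "eta t \<ge> 0" if t: "t \<ge> 0" for t
  proof -
    have "eta 0 \<le> eta t"
    proof (rule DERIV_nonneg_imp_increasing_open[OF t])
      fix x :: real assume x: "0 < x" "x < t"
      have "(eta has_real_derivative (real (Suc m) * x ^ m * U1 x powr q + x ^ Suc m * (U1 x powr q * (q * U2 x / U1 x))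
          - (real (Suc m) + q) * (real m * x ^ (m - 1) * V1 x + x ^ m * V2 x))) (at x)"
        unfolding eta_def using U1pos[of x] x m by (auto intro!: derivative_eq_intros dU1 dV1 simp: powr_diff xpow' field_simps)
      moreover have "real (Suc m) * x ^ m * U1 x powr q + x ^ Suc m * (U1 x powr q * (q * U2 x / U1 x))
          - (real (Suc m) + q) * (real m * x ^ (m - 1) * V1 x + x ^ m * V2 x) = q * U1 x powr q / U1 x * zeta x"
        using x m U1pos[of x] by (simp add: U2e V2e xpow'' field_simps zeta_def)
      moreover have "q * U1 x powr q / U1 x * zeta x \<ge> 0"
        using x U1pos[of x] zeta_nn[of x] pq by simp
      ultimately show "\<exists>y. (eta has_real_derivative y) (at x) \<and> 0 \<le> y" by metis
    next
      show "continuous_on {0..t} eta" unfolding eta_def by (intro continuous_intros cU1 cV1 cUq)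
    qed
    thus ?thesis using m by (simp add: eta_def power_0_left)
  qed
  \<comment> \<open>Step 5: comparison with the equilibrium\<close>
  define Ys where "Ys = (2 + q) / (1 - p * q)"
  define Zs where "Zs = real (Suc m) + p * Ys"
  define Ws where "Ws = real (Suc m) - 2 + Ys"
  have Ys0: "Ys > 0" using pq by (simp add: Ys_def)
  have hY: "Ys * (1 - p * q) = 2 + q" using pq by (simp add: Ys_def)
  define al where "al = (\<lambda>x. Ys * V x - x * V1 x)"
  define be where "be = (\<lambda>x. Zs * x ^ m * U1 x - x ^ Suc m * V x powr p)"
  define ga where "ga = (\<lambda>x. Ws * x ^ m * V1 x - x ^ Suc m * U1 x powr q)"
  have dal: "(al has_real_derivative (ga x / x ^ m)) (at x)" if x: "x > 0" for x
  proof -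
    have "(al has_real_derivative (Ys * V1 x - (V1 x + x * V2 x))) (at x)"
      unfolding al_def by (auto intro!: derivative_eq_intros dV dV1)
    moreover have "Ys * V1 x - (V1 x + x * V2 x) = ga x / x ^ m"
      using x m by (simp add: V2e ga_def Ws_def field_simps)
    ultimately show ?thesis by metis
  qed
  have dbe: "(be has_real_derivative (p * x ^ m * V x powr p / V x * al x)) (at x)" if x: "x > 0" for x
  proof -
    have "(be has_real_derivative (Zs * (real m * x ^ (m - 1) * U1 x + x ^ m * U2 x)
        - (real (Suc m) * x ^ m * V x powr p + x ^ Suc m * (V x powr p * (p * V1 x / V x))))) (at x)"
      unfolding be_def using Vpos[of x] m by (auto intro!: derivative_eq_intros dU1 dV simp: powr_diff xpow' field_simps)
    moreover have "Zs * (real m * x ^ (m - 1) * U1 x + x ^ m * U2 x)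
        - (real (Suc m) * x ^ m * V x powr p + x ^ Suc m * (V x powr p * (p * V1 x / V x)))
        = p * x ^ m * V x powr p / V x * al x"
      using x m Vpos[of x] by (simp add: U2e xpow'' Zs_def al_def field_simps)
    ultimately show ?thesis by metis
  qed
  have dga: "(ga has_real_derivative (q * U1 x powr q / U1 x * be x)) (at x)" if x: "x > 0" for x
  proof -
    have "(ga has_real_derivative (Ws * (real m * x ^ (m - 1) * V1 x + x ^ m * V2 x)
        - (real (Suc m) * x ^ m * U1 x powr q + x ^ Suc m * (U1 x powr q * (q * U2 x / U1 x))))) (at x)"
      unfolding ga_def using U1pos[of x] x m by (auto intro!: derivative_eq_intros dU1 dV1 simp: powr_diff xpow' field_simps)
    moreover have "Ws * (real m * x ^ (m - 1) * V1 x + x ^ m * V2 x)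
        - (real (Suc m) * x ^ m * U1 x powr q + x ^ Suc m * (U1 x powr q * (q * U2 x / U1 x)))
        - q * U1 x powr q / U1 x * be x = x ^ m * U1 x powr q * (Ys * (1 - p * q) - (2 + q))"
      using x m U1pos[of x] by (simp add: U2e V2e xpow'' Ws_def Zs_def be_def field_simps)
    ultimately show ?thesis using hY by simp
  qed
  have cal: "continuous_on A al" for A unfolding al_def by (intro continuous_intros cV cV1)
  have cbe: "continuous_on A be" for A unfolding be_def by (intro continuous_intros cU1 cVp)
  have cga: "continuous_on {0..t} ga" for t unfolding ga_def by (intro continuous_intros cV1 cUq)
  have al0: "al 0 > 0" using Ys0 Vpos[of 0] by (simp add: al_def)
  have be0: "be 0 = 0" using m by (simp add: be_def power_0_left)
  have ga0: "ga 0 = 0" using m by (simp add: ga_def power_0_left)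
  have Ppos: "\<forall>x>0. al x > 0 \<and> be x > 0 \<and> ga x > 0"
  proof (rule ccontr)
    assume nP: "\<not> ?thesis"
    define S where "S = {x. x > 0 \<and> \<not> (al x > 0 \<and> be x > 0 \<and> ga x > 0)}"
    have Sne: "S \<noteq> {}" using nP by (auto simp: S_def)
    have bdd: "bdd_below S" unfolding bdd_below_def S_def by (rule exI[of _ 0]) auto
    define r0 where "r0 = Inf S"
    have r0nn: "r0 \<ge> 0" unfolding r0_def by (rule cInf_greatest[OF Sne]) (auto simp: S_def)
    have below: "al y > 0 \<and> be y > 0 \<and> ga y > 0" if y: "0 < y" "y < r0" for y
    proof (rule ccontr)
      assume "\<not> (al y > 0 \<and> be y > 0 \<and> ga y > 0)"
      hence "y \<in> S" using y by (auto simp: S_def)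
      hence "r0 \<le> y" unfolding r0_def using bdd by (rule cInf_lower)
      thus False using y by simp
    qed
    have "al 0 \<le> al r0"
    proof (rule DERIV_nonneg_imp_increasing_open[OF r0nn])
      fix x :: real assume x: "0 < x" "x < r0"
      have "ga x / x ^ m \<ge> 0" using below[OF x] x by simp
      thus "\<exists>y. (al has_real_derivative y) (at x) \<and> 0 \<le> y" using dal[OF x(1)] by blast
    qed (rule cal)
    hence alr0: "al r0 > 0" using al0 by simp
    have "isCont al r0" using cal[of UNIV] by (simp add: continuous_on_eq_continuous_at)
    from pos_near[OF this alr0] obtain d where d: "d > 0" "\<forall>y. \<bar>y - r0\<bar> < d \<longrightarrow> al y > 0" by blast
    define R1 where "R1 = r0 + d / 2"
    have alpos: "al y > 0" if y: "0 \<le> y" "y \<le> R1" for y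
    proof (cases "y = 0")
      case True thus ?thesis using al0 by simp
    next
      case False
      show ?thesis
      proof (cases "y < r0")
        case True thus ?thesis using below[of y] y False by simp
      next
        case False2: False
        thus ?thesis using d y by (auto simp: R1_def)
      qed
    qed
    have bepos: "be y > 0" if y: "0 < y" "y \<le> R1" for y
    proof -
      have "be 0 < be y"
      proof (rule DERIV_pos_imp_increasing_open[OF y(1)])
        fix x :: real assume x: "0 < x" "x < y"
        have "p * x ^ m * V x powr p / V x * al x > 0"
          using alpos[of x] x y pq Vpos[of x] by simp
        thus "\<exists>z. (be has_real_derivative z) (at x) \<and> 0 < z" using dbe[OF x(1)] by blast
      qed (rule cbe)
      thus ?thesis using be0 by simp
    qed
    have gapos: "ga y > 0" if y: "0 < y" "y \<le> R1" for y
    proof -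
      have "ga 0 < ga y"
      proof (rule DERIV_pos_imp_increasing_open[OF y(1)])
        fix x :: real assume x: "0 < x" "x < y"
        have "q * U1 x powr q / U1 x * be x > 0"
          using bepos[of x] x y pq U1pos[of x] by simp
        thus "\<exists>z. (ga has_real_derivative z) (at x) \<and> 0 < z" using dga[OF x(1)] by blast
      qed (rule cga)
      thus ?thesis using ga0 by simp
    qed
    have "R1 \<le> r0" unfolding r0_def
    proof (rule cInf_greatest[OF Sne])
      fix s assume "s \<in> S"
      hence s: "s > 0" "\<not> (al s > 0 \<and> be s > 0 \<and> ga s > 0)" by (auto simp: S_def)
      show "R1 \<le> s"
      proof (rule ccontr)
        assume "\<not> R1 \<le> s"
        thus False using s alpos[of s] bepos[of s] gapos[of s] by simp
      qed
    qed
    thus False using d by (simp add: R1_def)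
  qed
  have U1R: "U1 R > 0" and V1R: "V1 R > 0" and VR: "V R > 0" using U1pos V1pos Vpos R by auto
  have Rm: "R ^ m > 0" using R by simp
  have "R ^ m * (real (Suc m) * U1 R) \<le> R ^ m * (R * V R powr p)"
    using zeta_nn[of R] R by (simp add: zeta_def algebra_simps)
  hence "real (Suc m) * U1 R \<le> R * V R powr p" using Rm by (rule mult_le_cancel_left_pos[THEN iffD1, rotated])
  hence Zlo: "real (Suc m) \<le> R * V R powr p / U1 R" using U1R by (simp add: le_divide_eq)
  have "R ^ m * ((real (Suc m) + q) * V1 R) \<le> R ^ m * (R * U1 R powr q)"
    using eta_nn[of R] R by (simp add: eta_def algebra_simps)
  hence "(real (Suc m) + q) * V1 R \<le> R * U1 R powr q" using Rm by (rule mult_le_cancel_left_pos[THEN iffD1, rotated])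
  hence Wlo: "real (Suc m) + q \<le> R * U1 R powr q / V1 R" using V1R by (simp add: le_divide_eq)
  have Yhi: "R * V1 R / V R \<le> Ys" using Ppos[rule_format, OF R] VR by (simp add: al_def divide_le_eq)
  have "R ^ m * (R * V R powr p) \<le> R ^ m * (Zs * U1 R)"
    using Ppos[rule_format, OF R] by (simp add: be_def algebra_simps)
  hence "R * V R powr p \<le> Zs * U1 R" using Rm by (rule mult_le_cancel_left_pos[THEN iffD1, rotated])
  hence Zhi: "R * V R powr p / U1 R \<le> Zs" using U1R by (simp add: divide_le_eq)
  have "R ^ m * (R * U1 R powr q) \<le> R ^ m * (Ws * V1 R)"
    using Ppos[rule_format, OF R] by (simp add: ga_def algebra_simps)
  hence "R * U1 R powr q \<le> Ws * V1 R" using Rm by (rule mult_le_cancel_left_pos[THEN iffD1, rotated])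
  hence Whi: "R * U1 R powr q / V1 R \<le> Ws" using V1R by (simp add: divide_le_eq)
  have Ylo: "0 \<le> R * V1 R / V R" using R V1R VR by simp
  show ?thesis using Ylo Yhi Zlo Zhi Wlo Whi by (simp add: Ys_def Zs_def Ws_def)
qed

theorem lemma7p3:
  fixes u v :: "'a::euclidean_space \<Rightarrow> real"
    and gu gv :: "'a \<Rightarrow> 'a" and Hu Hv :: "'a \<Rightarrow> 'a \<Rightarrow> 'a"
    and p q :: real
  assumes dim: "DIM('a) \<ge> 2"
    and pq: "0 < p" "p < 1" "1 \<le> q" "p * q < 1"
    and C2u: "C2_with u gu Hu" and C2v: "C2_with v gv Hv"
    and pos: "\<forall>x. u x > 0" "\<forall>x. v x > 0"
    and rad: "radially_symmetric u" "radially_symmetric v"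
    and eq1: "\<forall>x. laplacian_of Hu x = v x powr p"
    and eq2: "\<forall>x. laplacian_of Hv x = norm (gu x) powr q"
  shows "\<forall>e r. norm e = 1 \<longrightarrow> r > 0 \<longrightarrow>
    (let N = real DIM('a);
         U = (\<lambda>s. u (s *\<^sub>R e)); V = (\<lambda>s. v (s *\<^sub>R e));
         Y = r * deriv V r / V r;
         Z = r * V r powr p / deriv U r;
         W = r * deriv U r powr q / deriv V r
     in 0 \<le> Y \<and> Y \<le> (2 + q) / (1 - p * q) \<and>
        N \<le> Z \<and> Z \<le> N + p * (2 + q) / (1 - p * q) \<and>
        N + q \<le> W \<and> W \<le> N - 2 + (2 + q) / (1 - p * q))"
proof (intro allI impI)
  fix e :: 'a and r :: real
  assume e: "norm e = 1" and r: "r > 0"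
  define m where "m = DIM('a) - 1"
  have m1: "m \<ge> 1" and Nm: "DIM('a) = Suc m" using dim by (auto simp: m_def)
  have du: "\<forall>x. (u has_derivative (\<lambda>h. gu x \<bullet> h)) (at x)" and dgu: "\<forall>x. (gu has_derivative Hu x) (at x)"
    using C2u unfolding C2_with_def by auto
  have dv: "\<forall>x. (v has_derivative (\<lambda>h. gv x \<bullet> h)) (at x)" and dgv: "\<forall>x. (gv has_derivative Hv x) (at x)"
    using C2v unfolding C2_with_def by auto
  define U where "U = (\<lambda>s. u (s *\<^sub>R e))"
  define V where "V = (\<lambda>s. v (s *\<^sub>R e))"
  define U1 where "U1 = (\<lambda>s. gu (s *\<^sub>R e) \<bullet> e)"
  define U2 where "U2 = (\<lambda>s. Hu (s *\<^sub>R e) e \<bullet> e)"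
  define V1 where "V1 = (\<lambda>s. gv (s *\<^sub>R e) \<bullet> e)"
  define V2 where "V2 = (\<lambda>s. Hv (s *\<^sub>R e) e \<bullet> e)"
  have dU: "\<And>s. (U has_real_derivative U1 s) (at s)" unfolding U_def U1_def by (rule radial_D1[OF du])
  have dV: "\<And>s. (V has_real_derivative V1 s) (at s)" unfolding V_def V1_def by (rule radial_D1[OF dv])
  have dU1: "\<And>s. (U1 has_real_derivative U2 s) (at s)" unfolding U1_def U2_def by (rule radial_D2[OF dgu])
  have dV1: "\<And>s. (V1 has_real_derivative V2 s) (at s)" unfolding V1_def V2_def by (rule radial_D2[OF dgv])
  have Vpos: "\<And>s. V s > 0" using pos by (simp add: V_def)
  have U10: "U1 0 = 0" unfolding U1_def by (rule radial_even[OF du rad(1)])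
  have odeU: "U2 s + real m / s * U1 s = V s powr p" if s: "s > 0" for s
    using radial_lap[OF C2u rad(1) e s] eq1 Nm by (simp add: U1_def U2_def V_def)
  have odeV: "V2 s + real m / s * V1 s = \<bar>U1 s\<bar> powr q" if s: "s > 0" for s
  proof -
    have ns: "norm (s *\<^sub>R e) = s" using e s by simp
    have e0: "e \<noteq> 0" using e by auto
    have "gu (s *\<^sub>R e) = (U1 s / s) *\<^sub>R (s *\<^sub>R e)"
      using radial_grad[OF du rad(1) e, of "s *\<^sub>R e"] ns s e0 by (simp add: U1_def)
    hence "norm (gu (s *\<^sub>R e)) = \<bar>U1 s\<bar>" using e s by simp
    thus ?thesis using radial_lap[OF C2v rad(2) e s] eq2 Nm by (simp add: V1_def V2_def)
  qed
  note B = ode_bounds[OF m1 pq dV dU1 dV1 Vpos U10 odeU odeV r]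
  have "deriv U r = U1 r" using dU by (rule DERIV_imp_deriv)
  moreover have "deriv V r = V1 r" using dV by (rule DERIV_imp_deriv)
  ultimately show "let N = real DIM('a);
         U = (\<lambda>s. u (s *\<^sub>R e)); V = (\<lambda>s. v (s *\<^sub>R e));
         Y = r * deriv V r / V r;
         Z = r * V r powr p / deriv U r;
         W = r * deriv U r powr q / deriv V r
     in 0 \<le> Y \<and> Y \<le> (2 + q) / (1 - p * q) \<and>
        N \<le> Z \<and> Z \<le> N + p * (2 + q) / (1 - p * q) \<and>
        N + q \<le> W \<and> W \<le> N - 2 + (2 + q) / (1 - p * q)"
    using B unfolding Let_def U_def[symmetric] V_def[symmetric] Nm by simp
qed

end
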